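(* Let $\phi$ be a norm-to-weak continuous cocycle with respect to $\theta$ on $\mathbb{R}^+\times\Sigma\times X$ such that $(\phi,\theta)$ has a nested bounded pullback absorbing set. Then the following are equivalent: (a) $(\phi,\theta)$ has a pullback attractor; (b) $\phi$ is pullback $\kappa$-contracting; (c) $\phi$ is pullback asymptotically compact.
   Context: Let $X$ be a Banach space with norm $\|\cdot\|$. Let $\Sigma$ be a set and $\theta=\{\theta_t\}_{t\in\mathbb{R}}$ a group of bijections $\theta_t:\Sigma\to\Sigma$ with $\theta_0=\mathrm{id}$ and $\theta_{t+\tau}=\theta_t\circ\theta_\tau$. A cocycle with respect to $\theta$ is a map $\phi:\mathbb{R}^+\times\Sigma\times X\to X$ with $\phi(0,\sigma;x)=x$ and $\phi(s+t,\sigma;x)=\phi(s,\theta_t(\sigma);\phi(t,\sigma;x))$ for all $s,t\ge 0$; it is norm-to-weak continuous if for each $t\ge0$, $\sigma\in\Sigma$, $x_n\to x$ in norm implies $\phi(t,\sigma;x_n)\rightharpoonup\phi(t,\sigma;x)$ weakly in $X$. For $B\subset X$, $\phi(t,\sigma;B)=\{\phi(t,\sigma;x):x\in B\}$, and $\mathrm{dist}_X(A,C)=\sup_{a\in A}\inf_{c\in C}\|a-c\|$. A bounded pullback absorbing set is a family $\{B_\sigma\}_{\sigma\in\Sigma}$ of bounded subsets of $X$ such that for every $\sigma$ and bounded $B\subset X$ there is $T\ge0$ with $\phi(t,\theta_{-t}(\sigma);B)\subset B_\sigma$ for all $t\ge T$; it is nested if moreover $B_{\theta_{-t}(\sigma)}\subset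 B_\sigma$ for all $t\ge0$, $\sigma\in\Sigma$. A pullback attractor is a family $\{\mathcal{A}_\sigma\}_{\sigma\in\Sigma}$ of nonempty compact sets with $\phi(t,\sigma;\mathcal{A}_\sigma)=\mathcal{A}_{\theta_t(\sigma)}$ for all $t\ge0$, $\sigma$, and $\lim_{t\to+\infty}\mathrm{dist}_X(\phi(t,\theta_{-t}(\sigma);B),\mathcal{A}_\sigma)=0$ for every $\sigma$ and bounded $B$. The Kuratowski measure $\kappa(A)=\inf\{\delta>0: A$ has a finite cover by sets of diameter $<\delta\}$; $\phi$ is pullback $\kappa$-contracting if for all $\varepsilon>0$, $\sigma$, bounded $B$ there is $T$ with $\kappa(\phi(t,\theta_{-t}(\sigma);B))\le\varepsilon$ for $t\ge T$. $\phi$ is pullback asymptotically compact if for each $\sigma\in\Sigma$, every bounded sequence $\{x_n\}\subset X$ and every $\{t_n\}\subset\mathbb{R}^+$ with $t_n\to+\infty$, the sequence $\{\phi(t_n,\theta_{-t_n}(\sigma);x_n)\}$ is precompact in $X$. *)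

theory Defs
  imports "HOL-Analysis.Analysis" "HOL-Library.Extended_Real"
begin

definition base_flow :: "(real \<Rightarrow> 's \<Rightarrow> 's) \<Rightarrow> bool" where
  "base_flow \<theta> \<longleftrightarrow> (\<forall>t. bij (\<theta> t)) \<and> \<theta> 0 = id \<and>
     (\<forall>t \<tau>. \<theta> (t + \<tau>) = \<theta> t \<circ> \<theta> \<tau>)"

text \<open>Cocycle; only the values at times t >= 0 are relevant.\<close>
definition cocycle :: "(real \<Rightarrow> 's \<Rightarrow> 's) \<Rightarrow> (real \<Rightarrow> 's \<Rightarrow> 'x \<Rightarrow> 'x) \<Rightarrow> bool" where
  "cocycle \<theta> \<phi> \<longleftrightarrow> (\<forall>\<sigma> x. \<phi> 0 \<sigma> x = x) \<and>
     (\<forall>s t \<sigma> x. 0 \<le> s \<longrightarrow> 0 \<le> t \<longrightarrow> \<phi> (s + t) \<sigma> x = \<phi> s (\<theta> t \<sigma>) (\<phi> t \<sigma> x))"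

definition weakly_converges :: "(nat \<Rightarrow> 'x::real_normed_vector) \<Rightarrow> 'x \<Rightarrow> bool" where
  "weakly_converges xs x \<longleftrightarrow>
     (\<forall>f :: 'x \<Rightarrow> real. bounded_linear f \<longrightarrow> (\<lambda>n. f (xs n)) \<longlonglongrightarrow> f x)"

definition norm_to_weak_continuous :: "(real \<Rightarrow> 's \<Rightarrow> 'x::real_normed_vector \<Rightarrow> 'x) \<Rightarrow> bool" where
  "norm_to_weak_continuous \<phi> \<longleftrightarrow>
     (\<forall>t \<sigma> xs x. 0 \<le> t \<longrightarrow> xs \<longlonglongrightarrow> x \<longrightarrow>
        weakly_converges (\<lambda>n. \<phi> t \<sigma> (xs n)) (\<phi> t \<sigma> x))"

definition hsemidist :: "'x::real_normed_vector set \<Rightarrow> 'x set \<Rightarrow> ereal" where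
  "hsemidist A C = (if A = {} then 0 else (SUP a\<in>A. ereal (infdist a C)))"

definition pullback_absorbing ::
  "(real \<Rightarrow> 's \<Rightarrow> 's) \<Rightarrow> (real \<Rightarrow> 's \<Rightarrow> 'x::real_normed_vector \<Rightarrow> 'x) \<Rightarrow> ('s \<Rightarrow> 'x set) \<Rightarrow> bool" where
  "pullback_absorbing \<theta> \<phi> B \<longleftrightarrow> (\<forall>\<sigma>. bounded (B \<sigma>)) \<and>
     (\<forall>\<sigma> D. bounded D \<longrightarrow> (\<exists>T\<ge>0. \<forall>t\<ge>T. \<phi> t (\<theta> (-t) \<sigma>) ` D \<subseteq> B \<sigma>))"

definition nested :: "(real \<Rightarrow> 's \<Rightarrow> 's) \<Rightarrow> ('s \<Rightarrow> 'x set) \<Rightarrow> bool" where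
  "nested \<theta> B \<longleftrightarrow> (\<forall>t \<sigma>. 0 \<le> t \<longrightarrow> B (\<theta> (-t) \<sigma>) \<subseteq> B \<sigma>)"

definition pullback_attractor ::
  "(real \<Rightarrow> 's \<Rightarrow> 's) \<Rightarrow> (real \<Rightarrow> 's \<Rightarrow> 'x::real_normed_vector \<Rightarrow> 'x) \<Rightarrow> ('s \<Rightarrow> 'x set) \<Rightarrow> bool" where
  "pullback_attractor \<theta> \<phi> A \<longleftrightarrow>
     (\<forall>\<sigma>. A \<sigma> \<noteq> {} \<and> compact (A \<sigma>)) \<and>
     (\<forall>t \<sigma>. 0 \<le> t \<longrightarrow> \<phi> t \<sigma> ` A \<sigma> = A (\<theta> t \<sigma>)) \<and>
     (\<forall>\<sigma> D. bounded D \<longrightarrow>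
        ((\<lambda>t. hsemidist (\<phi> t (\<theta> (-t) \<sigma>) ` D) (A \<sigma>)) \<longlongrightarrow> 0) at_top)"

text \<open>Kuratowski measure of noncompactness, valued in the extended reals
  (infimum of the empty set is +infinity).\<close>
definition kuratowski :: "'a::metric_space set \<Rightarrow> ereal" where
  "kuratowski A = Inf {ereal \<delta> | \<delta>. \<delta> > 0 \<and>
     (\<exists>F. finite F \<and> A \<subseteq> \<Union>F \<and> (\<forall>S\<in>F. bounded S \<and> diameter S < \<delta>))}"

definition pullback_kappa_contracting ::
  "(real \<Rightarrow> 's \<Rightarrow> 's) \<Rightarrow> (real \<Rightarrow> 's \<Rightarrow> 'x::real_normed_vector \<Rightarrow> 'x) \<Rightarrow> bool" where
  "pullback_kappa_contracting \<theta> \<phi> \<longleftrightarrow>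
     (\<forall>\<epsilon>>0. \<forall>\<sigma> D. bounded D \<longrightarrow>
        (\<exists>T. \<forall>t\<ge>T. kuratowski (\<phi> t (\<theta> (-t) \<sigma>) ` D) \<le> ereal \<epsilon>))"

definition pullback_asymptotically_compact ::
  "(real \<Rightarrow> 's \<Rightarrow> 's) \<Rightarrow> (real \<Rightarrow> 's \<Rightarrow> 'x::real_normed_vector \<Rightarrow> 'x) \<Rightarrow> bool" where
  "pullback_asymptotically_compact \<theta> \<phi> \<longleftrightarrow>
     (\<forall>\<sigma> (xs :: nat \<Rightarrow> 'x) (ts :: nat \<Rightarrow> real).
        bounded (range xs) \<longrightarrow> (\<forall>n. 0 \<le> ts n) \<longrightarrow> filterlim ts at_top sequentially \<longrightarrow>
        compact (closure (range (\<lambda>n. \<phi> (ts n) (\<theta> (- ts n) \<sigma>) (xs n)))))"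

end

theory Submission
  imports Defs
begin


definition sublin :: "('x::real_normed_vector \<Rightarrow> real) \<Rightarrow> bool" where
  "sublin q \<longleftrightarrow> (\<forall>x y. q (x + y) \<le> q x + q y) \<and> (\<forall>c x. 0 \<le> c \<longrightarrow> q (c *\<^sub>R x) = c * q x)"

lemma sublin_0: "sublin q \<Longrightarrow> q 0 = 0"
  unfolding sublin_def by (metis mult_zero_left order_refl scale_zero_left)

lemma sublin_neg: "sublin q \<Longrightarrow> - q (- x) \<le> q x"
proof -
  assume a: "sublin q"
  have "q (x + - x) \<le> q x + q (-x)" using a unfolding sublin_def by blast
  then show ?thesis using sublin_0[OF a] by simp
qed

definition qy :: "('x::real_normed_vector \<Rightarrow> real) \<Rightarrow> 'x \<Rightarrow> 'x \<Rightarrow> real" where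
  "qy q y x = (INF t\<in>{0..}. q (x + t *\<^sub>R y) - t * q y)"

lemma qy_bdd: assumes "sublin q" shows "bdd_below ((\<lambda>t. q (x + t *\<^sub>R y) - t * q y) ` {0..})"
proof (rule bdd_belowI2)
  fix t :: real assume "t \<in> {0..}"
  hence t: "t \<ge> 0" by simp
  have "q (t *\<^sub>R y) = t * q y" using assms t unfolding sublin_def by blast
  moreover have "q ((x + t *\<^sub>R y) + (- x)) \<le> q (x + t *\<^sub>R y) + q (-x)" using assms unfolding sublin_def by blast
  ultimately show "- q (-x) \<le> q (x + t *\<^sub>R y) - t * q y" by simp
qed

lemma qy_le: assumes "sublin q" "t \<ge> 0" shows "qy q y x \<le> q (x + t *\<^sub>R y) - t * q y"
  unfolding qy_def by (rule cINF_lower[OF qy_bdd[OF assms(1)]]) (use assms in auto)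

lemma qy_ge: assumes "\<And>t. t \<ge> 0 \<Longrightarrow> m \<le> q (x + t *\<^sub>R y) - t * q y" shows "m \<le> qy q y x"
  unfolding qy_def by (rule cINF_greatest) (use assms in auto)

lemma qy_sublin: assumes q: "sublin q" shows "sublin (qy q y)"
  unfolding sublin_def
proof (intro conjI allI impI)
  fix x1 x2
  have sa: "q (a + b) \<le> q a + q b" for a b using q unfolding sublin_def by blast
  have hm: "q (c *\<^sub>R a) = c * q a" if "c \<ge> 0" for c a using q that unfolding sublin_def by blast
  have "qy q y (x1 + x2) - (q (x1 + s *\<^sub>R y) - s * q y) \<le> qy q y x2" if s: "s \<ge> 0" for s
  proof (rule qy_ge)
    fix t :: real assume t: "t \<ge> 0"
    have "qy q y (x1 + x2) \<le> q ((x1 + x2) + (s + t) *\<^sub>R y) - (s + t) * q y"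
      using qy_le[OF q] s t by simp
    also have "(x1 + x2) + (s + t) *\<^sub>R y = (x1 + s *\<^sub>R y) + (x2 + t *\<^sub>R y)"
      by (simp add: algebra_simps)
    finally show "qy q y (x1 + x2) - (q (x1 + s *\<^sub>R y) - s * q y) \<le> q (x2 + t *\<^sub>R y) - t * q y"
      using sa[of "x1 + s *\<^sub>R y" "x2 + t *\<^sub>R y"] by (simp add: algebra_simps)
  qed
  hence "qy q y (x1 + x2) - qy q y x2 \<le> qy q y x1"
    by (intro qy_ge) (smt (verit))
  thus "qy q y (x1 + x2) \<le> qy q y x1 + qy q y x2" by simp
next
  fix c :: real and x assume c: "0 \<le> c"
  have hm: "q (c *\<^sub>R a) = c * q a" if "c \<ge> 0" for c a using q that unfolding sublin_def by blast
  show "qy q y (c *\<^sub>R x) = c * qy q y x"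
  proof (cases "c = 0")
    case True
    have "qy q y 0 \<le> 0" using qy_le[OF q, of 0 y 0] sublin_0[OF q] by simp
    moreover have "0 \<le> qy q y 0" by (rule qy_ge) (simp add: hm)
    ultimately show ?thesis using True by simp
  next
    case False
    hence cp: "c > 0" using c by simp
    have "qy q y (c *\<^sub>R x) / c \<le> qy q y x"
    proof (rule qy_ge)
      fix s :: real assume s: "s \<ge> 0"
      have "qy q y (c *\<^sub>R x) \<le> q (c *\<^sub>R x + (c * s) *\<^sub>R y) - (c * s) * q y"
        using qy_le[OF q] s cp by simp
      also have "c *\<^sub>R x + (c * s) *\<^sub>R y = c *\<^sub>R (x + s *\<^sub>R y)" by (simp add: algebra_simps)
      finally have "qy q y (c *\<^sub>R x) \<le> c * (q (x + s *\<^sub>R y) - s * q y)"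
        using hm[OF c, of "x + s *\<^sub>R y"] by (simp add: algebra_simps)
      thus "qy q y (c *\<^sub>R x) / c \<le> q (x + s *\<^sub>R y) - s * q y" using cp by (simp add: field_simps)
    qed
    moreover have "c * qy q y x \<le> qy q y (c *\<^sub>R x)"
    proof (rule qy_ge)
      fix t :: real assume t: "t \<ge> 0"
      have "qy q y x \<le> q (x + (t / c) *\<^sub>R y) - (t / c) * q y"
        using qy_le[OF q, of "t / c"] t cp by simp
      hence "c * qy q y x \<le> c * (q (x + (t / c) *\<^sub>R y) - (t / c) * q y)" using cp by simp
      also have e: "c *\<^sub>R (x + (t / c) *\<^sub>R y) = c *\<^sub>R x + t *\<^sub>R y" using cp by (simp add: algebra_simps)
      have "c * (q (x + (t / c) *\<^sub>R y) - (t / c) * q y) = q (c *\<^sub>R x + t *\<^sub>R y) - t * q y"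
        using hm[OF c, of "x + (t / c) *\<^sub>R y", unfolded e] cp by (simp add: algebra_simps)
      finally show "c * qy q y x \<le> q (c *\<^sub>R x + t *\<^sub>R y) - t * q y" .
    qed
    ultimately show ?thesis using cp by (simp add: field_simps)
  qed
qed

lemma qy_le_q: "sublin q \<Longrightarrow> qy q y x \<le> q x"
  using qy_le[of q 0] by simp

lemma qy_le1: "sublin q \<Longrightarrow> qy q y x \<le> q (x + y) - q y"
  using qy_le[of q 1] by simp

lemma sublin_norm: "sublin (norm :: 'x::real_normed_vector \<Rightarrow> real)"
  unfolding sublin_def by (auto simp: norm_triangle_ineq)

definition HBF :: "'x::real_normed_vector \<Rightarrow> ('x \<Rightarrow> real) set" where
  "HBF x0 = {q. sublin q \<and> (\<forall>x. q x \<le> norm x) \<and> q (- x0) = - norm x0}"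

lemma HBF_init: "qy norm x0 \<in> HBF x0"
proof -
  have s: "sublin (qy norm x0)" by (rule qy_sublin[OF sublin_norm])
  have le: "qy norm x0 x \<le> norm x" for x using qy_le_q[OF sublin_norm] .
  have "qy norm x0 (- x0) \<le> - norm x0" using qy_le1[OF sublin_norm, of x0 "- x0"] by simp
  moreover have "- norm x0 \<le> qy norm x0 (- x0)" using sublin_neg[OF s, of x0] le[of x0] by simp
  ultimately show ?thesis using s le unfolding HBF_def by auto
qed

lemma HBF_lower: "q \<in> HBF x0 \<Longrightarrow> - norm x \<le> q x"
  unfolding HBF_def using sublin_neg[of q x] by (smt (verit) mem_Collect_eq norm_minus_cancel)

lemma HBF_chain:
  assumes C: "C \<subseteq> HBF x0" "C \<noteq> {}" and ch: "\<And>a b. a \<in> C \<Longrightarrow> b \<in> C \<Longrightarrow> a \<le> b \<or> b \<le> a"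
  shows "(\<lambda>x. INF q\<in>C. q x) \<in> HBF x0 \<and> (\<forall>q\<in>C. (\<lambda>x. INF q\<in>C. q x) \<le> q)"
proof -
  define l where "l = (\<lambda>x. INF q\<in>C. q x)"
  have bdd: "bdd_below ((\<lambda>q. q x) ` C)" for x
    by (rule bdd_belowI2[of _ "- norm x"]) (use C HBF_lower in blast)
  have lq: "l x \<le> q x" if "q \<in> C" for q x unfolding l_def by (rule cINF_lower[OF bdd that])
  have lg: "m \<le> l x" if "\<And>q. q \<in> C \<Longrightarrow> m \<le> q x" for m x
    unfolding l_def by (rule cINF_greatest[OF C(2)]) (use that in auto)
  have sq: "sublin q" if "q \<in> C" for q using that C unfolding HBF_def by auto
  have sub: "l (x + y) \<le> l x + l y" for x y
  proof -
    have "l (x + y) \<le> q1 x + q2 y" if "q1 \<in> C" "q2 \<in> C" for q1 q2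
    proof (cases "q1 \<le> q2")
      case True
      have "l (x + y) \<le> q1 (x + y)" by (rule lq[OF that(1)])
      also have "\<dots> \<le> q1 x + q1 y" using sq[OF that(1)] unfolding sublin_def by blast
      also have "\<dots> \<le> q1 x + q2 y" using True by (simp add: le_fun_def)
      finally show ?thesis .
    next
      case False
      hence F: "q2 \<le> q1" using ch[OF that] by blast
      have "l (x + y) \<le> q2 (x + y)" by (rule lq[OF that(2)])
      also have "\<dots> \<le> q2 x + q2 y" using sq[OF that(2)] unfolding sublin_def by blast
      also have "\<dots> \<le> q1 x + q2 y" using F by (simp add: le_fun_def)
      finally show ?thesis .
    qed
    hence "l (x + y) - q2 y \<le> l x" if "q2 \<in> C" for q2
      using that by (intro lg) (smt (verit))
    hence "l (x + y) - l x \<le> l y" by (intro lg) (smt (verit))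
    thus ?thesis by simp
  qed
  have hom: "l (c *\<^sub>R x) = c * l x" if c: "c \<ge> 0" for c x
  proof (cases "c = 0")
    case True
    obtain q where q: "q \<in> C" using C by blast
    have "l 0 \<le> 0" using lq[OF q, of 0] sublin_0[OF sq[OF q]] by simp
    moreover have "0 \<le> l 0" proof -
      have z: "\<And>q. q \<in> C \<Longrightarrow> q 0 = 0" using sublin_0 sq by blast
      show ?thesis by (rule lg) (simp add: z)
    qed
    ultimately show ?thesis using True by simp
  next
    case False
    hence cp: "c > 0" using c by simp
    have hm: "q (c *\<^sub>R x) = c * q x" if "q \<in> C" for q using sq[OF that] c unfolding sublin_def by blast
    have "l (c *\<^sub>R x) / c \<le> l x"
      by (rule lg) (use lq hm cp in \<open>force simp: field_simps\<close>)
    moreover have "c * l x \<le> l (c *\<^sub>R x)"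
      by (rule lg) (use lq hm cp in \<open>force simp: field_simps\<close>)
    ultimately show ?thesis using cp by (simp add: field_simps)
  qed
  have nb: "l x \<le> norm x" for x
  proof -
    obtain q where q: "q \<in> C" using C by blast
    have "q x \<le> norm x" using q C unfolding HBF_def by blast
    thus ?thesis using lq[OF q, of x] by linarith
  qed
  have x0: "l (- x0) = - norm x0"
  proof -
    obtain q where q: "q \<in> C" using C by blast
    have "l (- x0) \<le> - norm x0" using lq[OF q, of "- x0"] q C unfolding HBF_def by force
    moreover have "- norm x0 \<le> l (- x0)" by (rule lg) (use C in \<open>auto simp: HBF_def\<close>)
    ultimately show ?thesis by simp
  qed
  show ?thesis using sub hom nb x0 lq unfolding l_def[symmetric] HBF_def sublin_def
    by (auto simp: le_fun_def)
qed

lemma HB_exists: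
  fixes x0 :: "'x::real_normed_vector"
  assumes "x0 \<noteq> 0"
  shows "\<exists>f :: 'x \<Rightarrow> real. bounded_linear f \<and> f x0 \<noteq> 0"
proof -
  have po: "partial_order_on (HBF x0) (relation_of (\<lambda>a u. u \<le> a) (HBF x0))"
    unfolding partial_order_on_def preorder_on_def refl_on_def trans_def antisym_def relation_of_def
    by auto
  have "\<exists>u\<in>HBF x0. \<forall>a\<in>C. u \<le> a" if "C \<in> Chains (relation_of (\<lambda>a u. u \<le> a) (HBF x0))" for C
  proof (cases "C = {}")
    case True thus ?thesis using HBF_init by blast
  next
    case False
    have "C \<subseteq> HBF x0" using that unfolding Chains_def relation_of_def by auto
    moreover have "a \<le> b \<or> b \<le> a" if "a \<in> C" "b \<in> C" for a b
      using \<open>C \<in> Chains _\<close> that unfolding Chains_def relation_of_def by auto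
    ultimately show ?thesis using HBF_chain[of C x0] False by blast
  qed
  from predicate_Zorn[OF po this] obtain m where m: "m \<in> HBF x0"
    and min: "\<And>a. a \<in> HBF x0 \<Longrightarrow> a \<le> m \<Longrightarrow> a = m" by blast
  have sm: "sublin m" using m unfolding HBF_def by auto
  have eq: "qy m y = m" for y
  proof (rule min)
    have s: "sublin (qy m y)" by (rule qy_sublin[OF sm])
    have le: "qy m y \<le> m" using qy_le_q[OF sm] by (simp add: le_fun_def)
    show "qy m y \<le> m" by (rule le)
    have "qy m y x \<le> norm x" for x using le m unfolding HBF_def le_fun_def by (smt (verit) mem_Collect_eq)
    moreover have "qy m y (- x0) \<le> - norm x0" using m qy_le_q[OF sm, of y "- x0"] unfolding HBF_def by simp
    moreover have "- norm x0 \<le> qy m y (- x0)" using sublin_neg[OF s, of x0] calculation(1)[of x0] by simp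
    ultimately show "qy m y \<in> HBF x0" using s unfolding HBF_def by auto
  qed
  have add: "m (x + y) = m x + m y" for x y
  proof -
    have "m x \<le> m (x + y) - m y" using qy_le1[OF sm, of y x] eq[of y] by simp
    moreover have "m (x + y) \<le> m x + m y" using sm unfolding sublin_def by blast
    ultimately show ?thesis by simp
  qed
  have neg: "m (- x) = - m x" for x using add[of x "- x"] sublin_0[OF sm] by simp
  have hom: "m (c *\<^sub>R x) = c * m x" for c x
  proof (cases "c \<ge> 0")
    case True thus ?thesis using sm unfolding sublin_def by blast
  next
    case False
    have "m (c *\<^sub>R x) = m ((- c) *\<^sub>R (- x))" by simp
    also have "\<dots> = (- c) * m (- x)"
    proof -
      have h: "\<And>c x. 0 \<le> c \<Longrightarrow> m (c *\<^sub>R x) = c * m x" using sm unfolding sublin_def by blast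
      show ?thesis by (rule h) (use False in simp)
    qed
    finally show ?thesis using neg by simp
  qed
  have nb: "norm (m x) \<le> norm x * 1" for x
  proof -
    have a: "\<forall>x. m x \<le> norm x" using m unfolding HBF_def by blast
    have "m x \<le> norm x" "m (- x) \<le> norm (- x)" using a[rule_format, of x] a[rule_format, of "- x"] by auto
    thus ?thesis using neg by simp
  qed
  have bl: "bounded_linear m" by (rule bounded_linear_intro[OF add _ nb]) (simp add: hom)
  have "m x0 = norm x0" using m neg[of x0] unfolding HBF_def by auto
  thus ?thesis using bl assms by auto
qed




lemma weak_unique:
  assumes "weakly_converges xs a" "weakly_converges xs (b::'x::real_normed_vector)" shows "a = b"
proof (rule ccontr)
  assume "a \<noteq> b"
  then obtain f :: "'x \<Rightarrow> real" where f: "bounded_linear f" "f (a - b) \<noteq> 0"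
    using HB_exists[of "a - b"] by auto
  have "(\<lambda>n. f (xs n)) \<longlonglongrightarrow> f a" "(\<lambda>n. f (xs n)) \<longlonglongrightarrow> f b"
    using assms f(1) unfolding weakly_converges_def by auto
  hence "f a = f b" by (rule LIMSEQ_unique)
  thus False using f linear_diff[OF bounded_linear.linear[OF f(1)]] by simp
qed

lemma weak_subseq: "weakly_converges xs a \<Longrightarrow> strict_mono r \<Longrightarrow> weakly_converges (xs \<circ> r) a"
  unfolding weakly_converges_def using LIMSEQ_subseq_LIMSEQ by (fastforce simp: o_def)

lemma strong_weak: "xs \<longlonglongrightarrow> a \<Longrightarrow> weakly_converges xs a"
  unfolding weakly_converges_def using bounded_linear.tendsto by blast

lemma AT1: "filterlim (ts :: nat \<Rightarrow> real) at_top sequentially \<Longrightarrow> \<exists>N. \<forall>n\<ge>N. Z \<le> ts n"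
  unfolding filterlim_at_top eventually_sequentially by blast

lemma AT2: "(\<And>Z. \<exists>N. \<forall>n\<ge>N. Z \<le> (ts :: nat \<Rightarrow> real) n) \<Longrightarrow> filterlim ts at_top sequentially"
  unfolding filterlim_at_top eventually_sequentially by blast

lemma KU1:
  assumes "\<delta> > 0" "finite F" "A \<subseteq> \<Union>F" "\<forall>S\<in>F. bounded S \<and> diameter S < \<delta>"
  shows "kuratowski A \<le> ereal \<delta>"
  unfolding kuratowski_def
proof (rule Inf_lower)
  have P: "\<delta> > 0 \<and> (\<exists>F. finite F \<and> A \<subseteq> \<Union>F \<and> (\<forall>S\<in>F. bounded S \<and> diameter S < \<delta>))"
    using assms by blast
  show "ereal \<delta> \<in> {ereal \<delta> |\<delta>. \<delta> > 0 \<and> (\<exists>F. finite F \<and> A \<subseteq> \<Union>F \<and> (\<forall>S\<in>F. bounded S \<and> diameter S < \<delta>))}"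
    by (rule CollectI, rule exI[of _ \<delta>], rule conjI[OF refl P])
qed

lemma KU2:
  assumes "kuratowski A \<le> ereal \<epsilon>" "\<epsilon> < \<delta>"
  shows "\<exists>F. finite F \<and> A \<subseteq> \<Union>F \<and> (\<forall>S\<in>F. bounded S \<and> diameter S < \<delta>)"
proof -
  have "ereal \<epsilon> < ereal \<delta>" using assms(2) by simp
  hence "kuratowski A < ereal \<delta>" using assms(1) by (meson order.strict_trans1)
  then obtain u where u: "u \<in> {ereal \<delta> |\<delta>. \<delta> > 0 \<and> (\<exists>F. finite F \<and> A \<subseteq> \<Union>F \<and> (\<forall>S\<in>F. bounded S \<and> diameter S < \<delta>))}"
    "u < ereal \<delta>"
    unfolding kuratowski_def Inf_less_iff by (elim bexE) (rule that)
  from u(1) obtain d where d: "u = ereal d" "\<exists>F. finite F \<and> A \<subseteq> \<Union>F \<and> (\<forall>S\<in>F. bounded S \<and> diameter S < d)"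
    by blast
  have dd: "d < \<delta>" using u(2) d(1) by simp
  from d(2) obtain F where F: "finite F" "A \<subseteq> \<Union>F" "\<forall>S\<in>F. bounded S \<and> diameter S < d" by (elim exE conjE) (rule that)
  have "\<forall>S\<in>F. bounded S \<and> diameter S < \<delta>"
  proof
    fix S assume "S \<in> F" thus "bounded S \<and> diameter S < \<delta>" using F(3) dd by force
  qed
  thus ?thesis using F(1,2) by blast
qed

lemma TB_compact:
  fixes z :: "nat \<Rightarrow> 'x::banach"
  assumes "\<And>e. e > 0 \<Longrightarrow> \<exists>N F. finite F \<and> (\<forall>n\<ge>N. z n \<in> \<Union>F) \<and> (\<forall>S\<in>F. bounded S \<and> diameter S < e)"
  shows "compact (closure (range z))"
proof -
  have tb: "\<exists>k. finite k \<and> range z \<subseteq> (\<Union>x\<in>k. ball x e)" if e: "e > 0" for e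
  proof -
    obtain N F where F: "finite F" "\<forall>n\<ge>N. z n \<in> \<Union>F" "\<forall>S\<in>F. bounded S \<and> diameter S < e"
      using assms[OF e] by blast
    define k where "k = z ` {..<N} \<union> (\<lambda>S. SOME x. x \<in> S) ` {S\<in>F. S \<noteq> {}}"
    have "finite k" unfolding k_def using F(1) by auto
    moreover have "z n \<in> (\<Union>x\<in>k. ball x e)" for n
    proof (cases "n < N")
      case True
      have "z n \<in> k" using True by (simp add: k_def)
      moreover have "z n \<in> ball (z n) e" using e by simp
      ultimately show ?thesis by blast
    next
      case False
      then obtain S where S: "S \<in> F" "z n \<in> S" using F(2) by (meson UnionE not_le)
      have p: "(SOME x. x \<in> S) \<in> S" using S(2) by (metis someI)
      have "dist (SOME x. x \<in> S) (z n) \<le> diameter S"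
        by (rule diameter_bounded_bound) (use F(3) S p in auto)
      also have "\<dots> < e" using F(3) S by auto
      finally have "z n \<in> ball (SOME x. x \<in> S) e" by simp
      moreover have "(SOME x. x \<in> S) \<in> k" unfolding k_def using S by auto
      ultimately show ?thesis by blast
    qed
    ultimately show ?thesis by blast
  qed
  show ?thesis unfolding compact_eq_totally_bounded
  proof (intro conjI allI impI)
    show "complete (closure (range z))" by (simp add: complete_eq_closed)
    fix e :: real assume e: "e > 0"
    obtain k where k: "finite k" "range z \<subseteq> (\<Union>x\<in>k. ball x (e/2))" using tb[of "e/2"] e by auto
    have "closure (range z) \<subseteq> closure (\<Union>x\<in>k. cball x (e/2))"
    proof (rule closure_mono)
      have "(\<Union>x\<in>k. ball x (e/2)) \<subseteq> (\<Union>x\<in>k. cball x (e/2))"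
        by (intro UN_mono order_refl ball_subset_cball)
      thus "range z \<subseteq> (\<Union>x\<in>k. cball x (e/2))" using k(2) by (rule order_trans[rotated])
    qed
    also have "\<dots> = (\<Union>x\<in>k. cball x (e/2))"
      by (intro closure_closed closed_UN k(1) ballI closed_cball)
    also have "\<dots> \<subseteq> (\<Union>x\<in>k. ball x e)"
    proof -
      have "cball x (e/2) \<subseteq> ball x e" for x
      proof
        fix y assume "y \<in> cball x (e/2)" thus "y \<in> ball x e" using e by simp
      qed
      thus ?thesis by (intro UN_mono order_refl)
    qed
    finally show "\<exists>k. finite k \<and> closure (range z) \<subseteq> (\<Union>x\<in>k. ball x e)" using k(1) by blast
  qed
qed

lemma hsemidist_nonneg: "0 \<le> hsemidist A C"
proof (cases "A = {}")
  case False
  then obtain a where "a \<in> A" by auto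
  hence "ereal (infdist a C) \<le> hsemidist A C" using False unfolding hsemidist_def by (auto intro: SUP_upper)
  moreover have "0 \<le> ereal (infdist a C)" using infdist_nonneg[of a C] by simp
  ultimately show ?thesis by (rule order_trans[rotated])
qed (simp add: hsemidist_def)

lemma hsemidist_le: "(\<And>a. a \<in> A \<Longrightarrow> infdist a C \<le> e) \<Longrightarrow> 0 \<le> e \<Longrightarrow> hsemidist A C \<le> ereal e"
  unfolding hsemidist_def by (auto intro: SUP_least)

lemma hsemidist_ge: "a \<in> A \<Longrightarrow> ereal (infdist a C) \<le> hsemidist A C"
  unfolding hsemidist_def by (auto intro: SUP_upper)

locale CS =
  fixes \<theta> :: "real \<Rightarrow> 's \<Rightarrow> 's" and \<phi> :: "real \<Rightarrow> 's \<Rightarrow> 'x::banach \<Rightarrow> 'x" and B :: "'s \<Rightarrow> 'x set"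
  assumes bf: "base_flow \<theta>" and cc: "cocycle \<theta> \<phi>" and nw: "norm_to_weak_continuous \<phi>"
    and ab: "pullback_absorbing \<theta> \<phi> B" and ne: "nested \<theta> B"
begin

lemma th_comp: "\<theta> a (\<theta> b s) = \<theta> (a + b) s"
  using bf unfolding base_flow_def by simp

lemma th_0: "\<theta> 0 s = s"
  using bf unfolding base_flow_def by simp

lemma cc_add: "0 \<le> s \<Longrightarrow> 0 \<le> t \<Longrightarrow> \<phi> (s + t) \<sigma> x = \<phi> s (\<theta> t \<sigma>) (\<phi> t \<sigma> x)"
  using cc unfolding cocycle_def by blast

lemma decomp:
  assumes "0 \<le> s" "0 \<le> r"
  shows "\<phi> (s + r) (\<theta> (-(s+r)) \<sigma>) x = \<phi> s (\<theta> (-s) \<sigma>) (\<phi> r (\<theta> (-r) (\<theta> (-s) \<sigma>)) x)"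
proof -
  have e1: "\<theta> r (\<theta> (-(s+r)) \<sigma>) = \<theta> (-s) \<sigma>" by (simp add: th_comp)
  have e2: "\<theta> (-(s+r)) \<sigma> = \<theta> (-r) (\<theta> (-s) \<sigma>)" by (simp add: th_comp add.commute)
  have h: "\<phi> (s + r) (\<theta> (-(s+r)) \<sigma>) x = \<phi> s (\<theta> (-s) \<sigma>) (\<phi> r (\<theta> (-(s+r)) \<sigma>) x)"
    using cc_add[OF assms, of "\<theta> (-(s+r)) \<sigma>" x] unfolding e1 .
  show ?thesis using h e2 by simp
qed

lemma B_bounded: "bounded (B \<sigma>)" using ab unfolding pullback_absorbing_def by blast

lemma absorb_tail:
  assumes D: "bounded D" and s: "0 \<le> s"
  shows "\<exists>T. \<forall>t\<ge>T. \<forall>x\<in>D. \<phi> t (\<theta> (-t) \<sigma>) x \<in> \<phi> s (\<theta> (-s) \<sigma>) ` B \<sigma>"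
proof -
  obtain T1 where T1: "T1 \<ge> 0" "\<forall>r\<ge>T1. \<phi> r (\<theta> (-r) (\<theta> (-s) \<sigma>)) ` D \<subseteq> B (\<theta> (-s) \<sigma>)"
    using ab D unfolding pullback_absorbing_def by blast
  have Bs: "B (\<theta> (-s) \<sigma>) \<subseteq> B \<sigma>" using ne s unfolding nested_def by blast
  have "\<phi> t (\<theta> (-t) \<sigma>) x \<in> \<phi> s (\<theta> (-s) \<sigma>) ` B \<sigma>" if t: "t \<ge> s + T1" and x: "x \<in> D" for t x
  proof -
    have r: "t - s \<ge> T1" "0 \<le> t - s" using t T1 by auto
    have "\<phi> t (\<theta> (-t) \<sigma>) x = \<phi> (s + (t - s)) (\<theta> (-(s + (t - s))) \<sigma>) x" by simp
    also have "\<dots> = \<phi> s (\<theta> (-s) \<sigma>) (\<phi> (t - s) (\<theta> (-(t - s)) (\<theta> (-s) \<sigma>)) x)"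
      by (rule decomp[OF s r(2)])
    finally show ?thesis using T1(2) r(1) x Bs by blast
  qed
  thus ?thesis by blast
qed

lemma a_imp_b:
  assumes A: "pullback_attractor \<theta> \<phi> A"
  shows "pullback_kappa_contracting \<theta> \<phi>"
  unfolding pullback_kappa_contracting_def
proof (intro allI impI)
  fix \<epsilon> :: real and \<sigma> and D :: "'x set" assume \<epsilon>: "\<epsilon> > 0" and D: "bounded D"
  define e where "e = \<epsilon> / 3"
  have e: "e > 0" using \<epsilon> unfolding e_def by simp
  have Ac: "compact (A \<sigma>)" "A \<sigma> \<noteq> {}" using A unfolding pullback_attractor_def by auto
  have e2: "e/2 > 0" using e by simp
  obtain k where k: "finite k" "A \<sigma> \<subseteq> (\<Union>x\<in>k. ball x (e/2))"
    using Ac(1)[unfolded compact_eq_totally_bounded] e2 by blast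
  have lim: "((\<lambda>t. hsemidist (\<phi> t (\<theta> (-t) \<sigma>) ` D) (A \<sigma>)) \<longlongrightarrow> 0) at_top"
    using A D unfolding pullback_attractor_def by blast
  have "\<forall>\<^sub>F t in at_top. hsemidist (\<phi> t (\<theta> (-t) \<sigma>) ` D) (A \<sigma>) < ereal (e/2)"
    by (rule order_tendstoD(2)[OF lim]) (use e in simp)
  then obtain T where T: "\<And>t. t \<ge> T \<Longrightarrow> hsemidist (\<phi> t (\<theta> (-t) \<sigma>) ` D) (A \<sigma>) < ereal (e/2)"
    unfolding eventually_at_top_linorder by blast
  have "kuratowski (\<phi> t (\<theta> (-t) \<sigma>) ` D) \<le> ereal \<epsilon>" if t: "t \<ge> T" for t
  proof (rule KU1[OF \<epsilon>])
    show "finite ((\<lambda>x. ball x e) ` k)" using k(1) by simp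
    show "\<phi> t (\<theta> (-t) \<sigma>) ` D \<subseteq> \<Union>((\<lambda>x. ball x e) ` k)"
    proof
      fix a assume a: "a \<in> \<phi> t (\<theta> (-t) \<sigma>) ` D"
      have "ereal (infdist a (A \<sigma>)) < ereal (e/2)" using hsemidist_ge[OF a, of "A \<sigma>"] T[OF t] by (rule order.strict_trans1)
      hence "infdist a (A \<sigma>) < e/2" by simp
      then obtain c where c: "c \<in> A \<sigma>" "dist a c < e/2"
        using Ac(2) unfolding infdist_notempty[OF Ac(2)]
        by (subst (asm) cINF_less_iff) (auto intro: bdd_belowI2[of _ 0])
      then obtain x where x: "x \<in> k" "dist x c < e/2" using k(2) by auto
      have "dist x a < e" using c x dist_triangle_half_l[of x c e a] by (simp add: dist_commute)
      thus "a \<in> \<Union>((\<lambda>x. ball x e) ` k)" using x by auto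
    qed
    show "\<forall>S\<in>(\<lambda>x. ball x e) ` k. bounded S \<and> diameter S < \<epsilon>"
    proof
      fix S assume "S \<in> (\<lambda>x. ball x e) ` k"
      then obtain x where S: "S = ball x e" by auto
      have "diameter S \<le> 2 * e"
      proof (rule diameter_le)
        show "S \<noteq> {} \<or> 0 \<le> 2 * e" using e by simp
        fix u v assume "u \<in> S" "v \<in> S"
        hence "dist x u < e" "dist x v < e" using S by auto
        hence "dist u v \<le> 2 * e" using dist_triangle[of u v x] by (simp add: dist_commute)
        thus "norm (u - v) \<le> 2 * e" by (simp add: dist_norm)
      qed
      thus "bounded S \<and> diameter S < \<epsilon>" using S e unfolding e_def by auto
    qed
  qed
  thus "\<exists>T. \<forall>t\<ge>T. kuratowski (\<phi> t (\<theta> (-t) \<sigma>) ` D) \<le> ereal \<epsilon>" by blast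
qed

lemma b_imp_c:
  assumes K: "pullback_kappa_contracting \<theta> \<phi>"
  shows "pullback_asymptotically_compact \<theta> \<phi>"
  unfolding pullback_asymptotically_compact_def
proof (intro allI impI)
  fix \<sigma> and xs :: "nat \<Rightarrow> 'x" and ts :: "nat \<Rightarrow> real"
  assume xs: "bounded (range xs)" and ts0: "\<forall>n. 0 \<le> ts n" and ts: "filterlim ts at_top sequentially"
  show "compact (closure (range (\<lambda>n. \<phi> (ts n) (\<theta> (- ts n) \<sigma>) (xs n))))"
  proof (rule TB_compact)
    fix e :: real assume e: "e > 0"
    have e2: "e/2 > 0" using e by simp
    obtain T where T: "\<And>t. t \<ge> T \<Longrightarrow> kuratowski (\<phi> t (\<theta> (-t) \<sigma>) ` B \<sigma>) \<le> ereal (e/2)"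
      using K[unfolded pullback_kappa_contracting_def, rule_format, OF e2 B_bounded[of \<sigma>]] by blast
    define s where "s = max T 0"
    have s: "s \<ge> 0" "s \<ge> T" unfolding s_def by auto
    obtain T2 where T2: "\<And>t x. t \<ge> T2 \<Longrightarrow> x \<in> range xs \<Longrightarrow> \<phi> t (\<theta> (-t) \<sigma>) x \<in> \<phi> s (\<theta> (-s) \<sigma>) ` B \<sigma>"
      using absorb_tail[OF xs s(1), of \<sigma>] by blast
    obtain N where N: "\<And>n. n \<ge> N \<Longrightarrow> T2 \<le> ts n" using AT1[OF ts] by blast
    have ex: "\<exists>F. finite F \<and> \<phi> s (\<theta> (-s) \<sigma>) ` B \<sigma> \<subseteq> \<Union>F \<and> (\<forall>S\<in>F. bounded S \<and> diameter S < e)"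
      using KU2[OF T[OF s(2)], of e] e by simp
    then obtain F where F: "finite F" "\<phi> s (\<theta> (-s) \<sigma>) ` B \<sigma> \<subseteq> \<Union>F" "\<forall>S\<in>F. bounded S \<and> diameter S < e"
      by blast
    have "\<forall>n\<ge>N. \<phi> (ts n) (\<theta> (- ts n) \<sigma>) (xs n) \<in> \<Union>F"
    proof (intro allI impI)
      fix n assume "n \<ge> N"
      hence "\<phi> (ts n) (\<theta> (- ts n) \<sigma>) (xs n) \<in> \<phi> s (\<theta> (-s) \<sigma>) ` B \<sigma>"
        using T2 N by simp
      thus "\<phi> (ts n) (\<theta> (- ts n) \<sigma>) (xs n) \<in> \<Union>F" using F(2) by (rule subsetD[rotated])
    qed
    thus "\<exists>N F. finite F \<and> (\<forall>n\<ge>N. \<phi> (ts n) (\<theta> (- ts n) \<sigma>) (xs n) \<in> \<Union>F) \<and> (\<forall>S\<in>F. bounded S \<and> diameter S < e)"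
      using F by blast
  qed
qed


definition Om :: "'s \<Rightarrow> 'x set" where
  "Om \<sigma> = {y. \<exists>xs ts. bounded (range xs) \<and> (\<forall>n. 0 \<le> ts n) \<and> filterlim ts at_top sequentially \<and>
      (\<lambda>n. \<phi> (ts n) (\<theta> (- ts n) \<sigma>) (xs n)) \<longlonglongrightarrow> y}"

lemma OmI:
  assumes "bounded (range xs)" "\<forall>n. 0 \<le> ts n" "filterlim ts at_top sequentially"
    "(\<lambda>n. \<phi> (ts n) (\<theta> (- ts n) \<sigma>) (xs n)) \<longlonglongrightarrow> y"
  shows "y \<in> Om \<sigma>"
  unfolding Om_def using assms by blast

lemma OmE:
  assumes "y \<in> Om \<sigma>"
  obtains xs ts where "bounded (range xs)" "\<forall>n. 0 \<le> ts n" "filterlim ts at_top sequentially"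
    "(\<lambda>n. \<phi> (ts n) (\<theta> (- ts n) \<sigma>) (xs n)) \<longlonglongrightarrow> y"
  using assms unfolding Om_def by blast

lemma Om_approx:
  assumes y: "y \<in> Om \<sigma>" and s: "0 \<le> s" and e: "0 < e"
  shows "\<exists>x. x \<in> B \<sigma> \<and> dist (\<phi> s (\<theta> (-s) \<sigma>) x) y < e"
proof -
  obtain xs ts where xs: "bounded (range xs)" and ts0: "\<forall>n. 0 \<le> ts n"
    and ts: "filterlim ts at_top sequentially" and lim: "(\<lambda>n. \<phi> (ts n) (\<theta> (- ts n) \<sigma>) (xs n)) \<longlonglongrightarrow> y"
    using y by (rule OmE)
  obtain T where T: "\<forall>t\<ge>T. \<forall>x\<in>range xs. \<phi> t (\<theta> (-t) \<sigma>) x \<in> \<phi> s (\<theta> (-s) \<sigma>) ` B \<sigma>"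
    using absorb_tail[OF xs s] by blast
  obtain N1 where N1: "\<forall>n\<ge>N1. T \<le> ts n" using AT1[OF ts] by blast
  obtain N2 where N2: "\<forall>n\<ge>N2. dist (\<phi> (ts n) (\<theta> (- ts n) \<sigma>) (xs n)) y < e"
    using lim[unfolded lim_sequentially, rule_format, OF e] by blast
  define n where "n = max N1 N2"
  have "\<phi> (ts n) (\<theta> (- ts n) \<sigma>) (xs n) \<in> \<phi> s (\<theta> (-s) \<sigma>) ` B \<sigma>"
    using T N1 unfolding n_def by simp
  then obtain x where x: "x \<in> B \<sigma>" "\<phi> (ts n) (\<theta> (- ts n) \<sigma>) (xs n) = \<phi> s (\<theta> (-s) \<sigma>) x" by blast
  have "dist (\<phi> (ts n) (\<theta> (- ts n) \<sigma>) (xs n)) y < e" using N2 unfolding n_def by simp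
  hence "dist (\<phi> s (\<theta> (-s) \<sigma>) x) y < e" using x(2) by simp
  thus ?thesis using x(1) by blast
qed

context
  assumes AC: "pullback_asymptotically_compact \<theta> \<phi>"
begin

lemma AC_extract:
  assumes xs: "bounded (range xs)" and ts0: "\<forall>n. 0 \<le> ts n" and ts: "filterlim ts at_top sequentially"
  shows "\<exists>r y. strict_mono r \<and> ((\<lambda>n. \<phi> (ts n) (\<theta> (- ts n) \<sigma>) (xs n)) \<circ> r) \<longlonglongrightarrow> y \<and> y \<in> Om \<sigma>"
proof -
  define z where "z = (\<lambda>n. \<phi> (ts n) (\<theta> (- ts n) \<sigma>) (xs n))"
  have c: "compact (closure (range z))"
    unfolding z_def using AC[unfolded pullback_asymptotically_compact_def, THEN spec[of _ \<sigma>],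
      THEN spec[of _ xs], THEN spec[of _ ts], THEN mp, THEN mp, THEN mp, OF xs ts0 ts] .
  have sc: "seq_compact (closure (range z))" by (rule compact_imp_seq_compact[OF c])
  have "\<forall>n. z n \<in> closure (range z)" by (intro allI closure_subset[THEN subsetD] rangeI)
  then obtain y r where yr: "y \<in> closure (range z)" "strict_mono r" "(z \<circ> r) \<longlonglongrightarrow> y"
    by (rule seq_compactE[OF sc])
  have "y \<in> Om \<sigma>"
  proof (rule OmI[of "\<lambda>n. xs (r n)" "\<lambda>n. ts (r n)"])
    show "bounded (range (\<lambda>n. xs (r n)))" by (rule bounded_subset[OF xs], rule image_subsetI, rule rangeI)
    show "\<forall>n. 0 \<le> ts (r n)" using ts0 by simp
    show "filterlim (\<lambda>n. ts (r n)) at_top sequentially"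
      by (rule filterlim_compose[OF ts filterlim_subseq[OF yr(2)]])
    show "(\<lambda>n. \<phi> (ts (r n)) (\<theta> (- ts (r n)) \<sigma>) (xs (r n))) \<longlonglongrightarrow> y"
      using yr(3) unfolding z_def o_def .
  qed
  thus ?thesis using yr(2,3) unfolding z_def by blast
qed

lemma Om_nonempty: "Om \<sigma> \<noteq> {}"
proof -
  have "bounded (range (\<lambda>n::nat. 0::'x))" by simp
  moreover have "\<forall>n. 0 \<le> real n" by simp
  ultimately have "\<exists>r y. strict_mono r \<and> ((\<lambda>n. \<phi> (real n) (\<theta> (- real n) \<sigma>) 0) \<circ> r) \<longlonglongrightarrow> y \<and> y \<in> Om \<sigma>"
    by (rule AC_extract[OF _ _ filterlim_real_sequentially])
  then obtain r y where "y \<in> Om \<sigma>" by (elim exE conjE)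
  thus ?thesis by blast
qed

lemma Om_compact: "compact (Om \<sigma>)"
  unfolding compact_eq_seq_compact_metric seq_compact_def
proof (intro allI impI)
  fix f :: "nat \<Rightarrow> 'x" assume f: "\<forall>n. f n \<in> Om \<sigma>"
  have "\<forall>n. \<exists>x. x \<in> B \<sigma> \<and> dist (\<phi> (real n) (\<theta> (- real n) \<sigma>) x) (f n) < inverse (real (Suc n))"
  proof
    fix n show "\<exists>x. x \<in> B \<sigma> \<and> dist (\<phi> (real n) (\<theta> (- real n) \<sigma>) x) (f n) < inverse (real (Suc n))"
      by (rule Om_approx) (use f in auto)
  qed
  from choice[OF this] obtain xs where xs: "\<forall>n. xs n \<in> B \<sigma> \<and>
     dist (\<phi> (real n) (\<theta> (- real n) \<sigma>) (xs n)) (f n) < inverse (real (Suc n))" by blast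
  define z where "z = (\<lambda>n. \<phi> (real n) (\<theta> (- real n) \<sigma>) (xs n))"
  have bx: "bounded (range xs)" by (rule bounded_subset[OF B_bounded[of \<sigma>]]) (use xs in blast)
  obtain r y where ry: "strict_mono r" "(z \<circ> r) \<longlonglongrightarrow> y" "y \<in> Om \<sigma>"
    using AC_extract[OF bx _ filterlim_real_sequentially, of \<sigma>] unfolding z_def by auto
  have "(\<lambda>n. (f \<circ> r) n - (z \<circ> r) n) \<longlonglongrightarrow> 0"
  proof (rule Lim_null_comparison[OF _ LIMSEQ_inverse_real_of_nat])
    show "\<forall>\<^sub>F n in sequentially. norm ((f \<circ> r) n - (z \<circ> r) n) \<le> inverse (real (Suc n))"
    proof (rule always_eventually, rule allI)
      fix n
      have "norm ((f \<circ> r) n - (z \<circ> r) n) = dist (z (r n)) (f (r n))"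
        by (simp add: dist_norm norm_minus_commute)
      also have "\<dots> < inverse (real (Suc (r n)))" using xs unfolding z_def by blast
      also have "\<dots> \<le> inverse (real (Suc n))"
        using seq_suble[OF ry(1), of n] by (simp add: le_imp_inverse_le)
      finally show "norm ((f \<circ> r) n - (z \<circ> r) n) \<le> inverse (real (Suc n))" by simp
    qed
  qed
  hence "(f \<circ> r) \<longlonglongrightarrow> y" by (rule Lim_transform[OF ry(2)])
  thus "\<exists>l\<in>Om \<sigma>. \<exists>r. strict_mono r \<and> (f \<circ> r) \<longlonglongrightarrow> l" using ry by blast
qed

lemma Om_key:
  assumes D: "bounded D" and e: "e > 0"
  shows "\<exists>T. \<forall>t\<ge>T. \<forall>x\<in>D. infdist (\<phi> t (\<theta> (-t) \<sigma>) x) (Om \<sigma>) < e"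
proof (rule ccontr)
  assume neg: "\<not> (\<exists>T. \<forall>t\<ge>T. \<forall>x\<in>D. infdist (\<phi> t (\<theta> (-t) \<sigma>) x) (Om \<sigma>) < e)"
  have "\<forall>n::nat. \<exists>t. t \<ge> real n \<and> (\<exists>x. x \<in> D \<and> \<not> infdist (\<phi> t (\<theta> (-t) \<sigma>) x) (Om \<sigma>) < e)"
  proof
    fix n :: nat
    have "\<not> (\<forall>t\<ge>real n. \<forall>x\<in>D. infdist (\<phi> t (\<theta> (-t) \<sigma>) x) (Om \<sigma>) < e)" using neg by blast
    thus "\<exists>t. t \<ge> real n \<and> (\<exists>x. x \<in> D \<and> \<not> infdist (\<phi> t (\<theta> (-t) \<sigma>) x) (Om \<sigma>) < e)" by blast
  qed
  from choice[OF this] obtain ts where ts: "\<forall>n. ts n \<ge> real n \<and>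
      (\<exists>x. x \<in> D \<and> \<not> infdist (\<phi> (ts n) (\<theta> (- ts n) \<sigma>) x) (Om \<sigma>) < e)" by blast
  hence "\<forall>n. \<exists>x. x \<in> D \<and> \<not> infdist (\<phi> (ts n) (\<theta> (- ts n) \<sigma>) x) (Om \<sigma>) < e" by blast
  from choice[OF this] obtain xs where xs: "\<forall>n. xs n \<in> D \<and>
      \<not> infdist (\<phi> (ts n) (\<theta> (- ts n) \<sigma>) (xs n)) (Om \<sigma>) < e" by blast
  have bx: "bounded (range xs)" by (rule bounded_subset[OF D], rule image_subsetI) (use xs in blast)
  have t0: "\<forall>n. 0 \<le> ts n"
  proof
    fix n have "real n \<le> ts n" using ts by blast
    thus "0 \<le> ts n" by (meson of_nat_0_le_iff order_trans)
  qed
  have tl: "filterlim ts at_top sequentially"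
  proof (rule AT2)
    fix Z :: real
    obtain N :: nat where N: "Z \<le> real N" using real_arch_simple by blast
    have "\<forall>n\<ge>N. Z \<le> ts n"
    proof (intro allI impI)
      fix n assume "N \<le> n"
      hence "real N \<le> real n" by simp
      moreover have "real n \<le> ts n" using ts by blast
      ultimately show "Z \<le> ts n" using N by linarith
    qed
    thus "\<exists>N. \<forall>n\<ge>N. Z \<le> ts n" by blast
  qed
  obtain r y where ry: "strict_mono r" "((\<lambda>n. \<phi> (ts n) (\<theta> (- ts n) \<sigma>) (xs n)) \<circ> r) \<longlonglongrightarrow> y" "y \<in> Om \<sigma>"
    using AC_extract[OF bx t0 tl, of \<sigma>] by (elim exE conjE)
  have "(\<lambda>n. infdist (((\<lambda>n. \<phi> (ts n) (\<theta> (- ts n) \<sigma>) (xs n)) \<circ> r) n) (Om \<sigma>)) \<longlonglongrightarrow> infdist y (Om \<sigma>)"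
    by (rule tendsto_infdist[OF ry(2)])
  hence "(\<lambda>n. infdist (((\<lambda>n. \<phi> (ts n) (\<theta> (- ts n) \<sigma>) (xs n)) \<circ> r) n) (Om \<sigma>)) \<longlonglongrightarrow> 0"
    using ry(3) by simp
  hence "\<forall>\<^sub>F n in sequentially. infdist (((\<lambda>n. \<phi> (ts n) (\<theta> (- ts n) \<sigma>) (xs n)) \<circ> r) n) (Om \<sigma>) < e"
    by (rule order_tendstoD(2)) (rule e)
  then obtain N where "\<forall>n\<ge>N. infdist (((\<lambda>n. \<phi> (ts n) (\<theta> (- ts n) \<sigma>) (xs n)) \<circ> r) n) (Om \<sigma>) < e"
    unfolding eventually_sequentially by blast
  hence "infdist (\<phi> (ts (r N)) (\<theta> (- ts (r N)) \<sigma>) (xs (r N))) (Om \<sigma>) < e" by simp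
  thus False using xs by blast
qed

lemma Om_attract:
  assumes D: "bounded D"
  shows "((\<lambda>t. hsemidist (\<phi> t (\<theta> (-t) \<sigma>) ` D) (Om \<sigma>)) \<longlongrightarrow> 0) at_top"
proof (rule order_tendstoI)
  fix a :: ereal assume a: "a < 0"
  have "a < hsemidist (\<phi> t (\<theta> (-t) \<sigma>) ` D) (Om \<sigma>)" for t
    using a hsemidist_nonneg by (rule order.strict_trans2)
  thus "\<forall>\<^sub>F t in at_top. a < hsemidist (\<phi> t (\<theta> (-t) \<sigma>) ` D) (Om \<sigma>)"
    by (intro always_eventually allI)
next
  fix a :: ereal assume a: "0 < a"
  obtain e where e: "0 < ereal e" "ereal e < a" using ereal_dense2[OF a] by blast
  have e0: "e > 0" using e(1) by simp
  obtain T where T: "\<forall>t\<ge>T. \<forall>x\<in>D. infdist (\<phi> t (\<theta> (-t) \<sigma>) x) (Om \<sigma>) < e"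
    using Om_key[OF D e0] by blast
  have "hsemidist (\<phi> t (\<theta> (-t) \<sigma>) ` D) (Om \<sigma>) < a" if t: "t \<ge> T" for t
  proof -
    have "hsemidist (\<phi> t (\<theta> (-t) \<sigma>) ` D) (Om \<sigma>) \<le> ereal e"
    proof (rule hsemidist_le)
      fix b assume "b \<in> \<phi> t (\<theta> (-t) \<sigma>) ` D"
      then obtain x where x: "x \<in> D" "b = \<phi> t (\<theta> (-t) \<sigma>) x" by blast
      have "infdist b (Om \<sigma>) < e" using T t x by blast
      thus "infdist b (Om \<sigma>) \<le> e" by simp
    next
      show "0 \<le> e" using e0 by simp
    qed
    thus ?thesis using e(2) by (rule order.strict_trans1)
  qed
  thus "\<forall>\<^sub>F t in at_top. hsemidist (\<phi> t (\<theta> (-t) \<sigma>) ` D) (Om \<sigma>) < a"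
    unfolding eventually_at_top_linorder by blast
qed

lemma nw_app: "0 \<le> t \<Longrightarrow> xs \<longlonglongrightarrow> x \<Longrightarrow> weakly_converges (\<lambda>n. \<phi> t \<sigma> (xs n)) (\<phi> t \<sigma> x)"
  using nw unfolding norm_to_weak_continuous_def by blast

lemma Om_inv1:
  assumes t: "0 \<le> t" and y: "y \<in> Om \<sigma>"
  shows "\<phi> t \<sigma> y \<in> Om (\<theta> t \<sigma>)"
proof -
  obtain xs ts where xs: "bounded (range xs)" and ts0: "\<forall>n. 0 \<le> ts n"
    and ts: "filterlim ts at_top sequentially" and lim: "(\<lambda>n. \<phi> (ts n) (\<theta> (- ts n) \<sigma>) (xs n)) \<longlonglongrightarrow> y"
    using y by (rule OmE)
  define z where "z = (\<lambda>n. \<phi> (ts n) (\<theta> (- ts n) \<sigma>) (xs n))"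
  define ts' where "ts' = (\<lambda>n. t + ts n)"
  have eq: "\<phi> (ts' n) (\<theta> (- ts' n) (\<theta> t \<sigma>)) (xs n) = \<phi> t \<sigma> (z n)" for n
  proof -
    have e1: "\<theta> (- (t + ts n)) (\<theta> t \<sigma>) = \<theta> (- ts n) \<sigma>" unfolding th_comp by simp
    have e2: "\<theta> (ts n) (\<theta> (- ts n) \<sigma>) = \<sigma>" unfolding th_comp by (simp add: th_0)
    have "\<phi> (t + ts n) (\<theta> (- ts n) \<sigma>) (xs n) = \<phi> t (\<theta> (ts n) (\<theta> (- ts n) \<sigma>)) (\<phi> (ts n) (\<theta> (- ts n) \<sigma>) (xs n))"
      using cc_add[OF t, of "ts n"] ts0 by blast
    hence h: "\<phi> (t + ts n) (\<theta> (- ts n) \<sigma>) (xs n) = \<phi> t \<sigma> (z n)" unfolding e2 z_def .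
    show ?thesis unfolding ts'_def e1 by (rule h)
  qed
  have ts'0: "\<forall>n. 0 \<le> ts' n" using ts0 t unfolding ts'_def by simp
  have ts'l: "filterlim ts' at_top sequentially"
  proof (rule AT2)
    fix Z :: real
    obtain N where "\<forall>n\<ge>N. Z - t \<le> ts n" using AT1[OF ts] by blast
    hence "\<forall>n\<ge>N. Z \<le> ts' n" unfolding ts'_def by force
    thus "\<exists>N. \<forall>n\<ge>N. Z \<le> ts' n" by blast
  qed
  obtain r v where rv: "strict_mono r" "((\<lambda>n. \<phi> (ts' n) (\<theta> (- ts' n) (\<theta> t \<sigma>)) (xs n)) \<circ> r) \<longlonglongrightarrow> v"
    "v \<in> Om (\<theta> t \<sigma>)"
    using AC_extract[OF xs ts'0 ts'l, of "\<theta> t \<sigma>"] by (elim exE conjE)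
  have w1: "weakly_converges ((\<lambda>n. \<phi> t \<sigma> (z n)) \<circ> r) v"
    using strong_weak[OF rv(2)] unfolding eq .
  have w2: "weakly_converges ((\<lambda>n. \<phi> t \<sigma> (z n)) \<circ> r) (\<phi> t \<sigma> y)"
    by (rule weak_subseq[OF nw_app[OF t] rv(1)]) (use lim in \<open>simp add: z_def\<close>)
  have "\<phi> t \<sigma> y = v" by (rule weak_unique[OF w2 w1])
  thus ?thesis using rv(3) by simp
qed

lemma Om_inv2:
  assumes t: "0 \<le> t" and v: "v \<in> Om (\<theta> t \<sigma>)"
  shows "v \<in> \<phi> t \<sigma> ` Om \<sigma>"
proof -
  obtain xs ts where xs: "bounded (range xs)" and ts0: "\<forall>n. 0 \<le> ts n"
    and ts: "filterlim ts at_top sequentially"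
    and lim: "(\<lambda>n. \<phi> (ts n) (\<theta> (- ts n) (\<theta> t \<sigma>)) (xs n)) \<longlonglongrightarrow> v"
    using v by (rule OmE)
  obtain N where N: "\<forall>n\<ge>N. t \<le> ts n" using AT1[OF ts] by blast
  define ts' where "ts' = (\<lambda>n. ts (n + N) - t)"
  define xs' where "xs' = (\<lambda>n. xs (n + N))"
  define u where "u = (\<lambda>n. \<phi> (ts' n) (\<theta> (- ts' n) \<sigma>) (xs' n))"
  have ts'0: "\<forall>n. 0 \<le> ts' n" using N unfolding ts'_def by simp
  have eq: "\<phi> t \<sigma> (u n) = \<phi> (ts (n + N)) (\<theta> (- ts (n + N)) (\<theta> t \<sigma>)) (xs (n + N))" for n
  proof -
    have e0: "t + ts' n = ts (n + N)" unfolding ts'_def by simp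
    have e1: "\<theta> (- ts (n + N)) (\<theta> t \<sigma>) = \<theta> (- ts' n) \<sigma>" unfolding ts'_def th_comp by simp
    have e2: "\<theta> (ts' n) (\<theta> (- ts' n) \<sigma>) = \<sigma>" unfolding th_comp by (simp add: th_0)
    have "\<phi> (t + ts' n) (\<theta> (- ts' n) \<sigma>) (xs' n) = \<phi> t (\<theta> (ts' n) (\<theta> (- ts' n) \<sigma>)) (\<phi> (ts' n) (\<theta> (- ts' n) \<sigma>) (xs' n))"
      using cc_add[OF t, of "ts' n"] ts'0 by blast
    thus ?thesis unfolding e0 e1 e2 u_def xs'_def by simp
  qed
  have bx: "bounded (range xs')" unfolding xs'_def by (rule bounded_subset[OF xs], rule image_subsetI, rule rangeI)
  have ts'l: "filterlim ts' at_top sequentially"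
  proof (rule AT2)
    fix Z :: real
    obtain M where M: "\<forall>n\<ge>M. Z + t \<le> ts n" using AT1[OF ts] by blast
    have "\<forall>n\<ge>M. Z \<le> ts' n"
    proof (intro allI impI)
      fix n assume "M \<le> n"
      hence "Z + t \<le> ts (n + N)" using M by simp
      thus "Z \<le> ts' n" unfolding ts'_def by simp
    qed
    thus "\<exists>N. \<forall>n\<ge>N. Z \<le> ts' n" by blast
  qed
  obtain r y where ry: "strict_mono r" "((\<lambda>n. \<phi> (ts' n) (\<theta> (- ts' n) \<sigma>) (xs' n)) \<circ> r) \<longlonglongrightarrow> y" "y \<in> Om \<sigma>"
    using AC_extract[OF bx ts'0 ts'l, of \<sigma>] by (elim exE conjE)
  have ul: "(\<lambda>n. u (r n)) \<longlonglongrightarrow> y" using ry(2) unfolding u_def o_def .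
  have w1: "weakly_converges (\<lambda>n. \<phi> t \<sigma> (u (r n))) (\<phi> t \<sigma> y)" by (rule nw_app[OF t ul])
  have "(\<lambda>n. \<phi> (ts (n + N)) (\<theta> (- ts (n + N)) (\<theta> t \<sigma>)) (xs (n + N))) \<longlonglongrightarrow> v"
    by (rule LIMSEQ_ignore_initial_segment[OF lim])
  hence "((\<lambda>n. \<phi> (ts (n + N)) (\<theta> (- ts (n + N)) (\<theta> t \<sigma>)) (xs (n + N))) \<circ> r) \<longlonglongrightarrow> v"
    by (rule LIMSEQ_subseq_LIMSEQ[OF _ ry(1)])
  hence "(\<lambda>n. \<phi> t \<sigma> (u (r n))) \<longlonglongrightarrow> v" unfolding o_def eq .
  hence w2: "weakly_converges (\<lambda>n. \<phi> t \<sigma> (u (r n))) v" by (rule strong_weak)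
  have "\<phi> t \<sigma> y = v" by (rule weak_unique[OF w1 w2])
  thus ?thesis using ry(3) by blast
qed

lemma c_imp_a: "pullback_attractor \<theta> \<phi> Om"
  unfolding pullback_attractor_def
proof (intro conjI allI impI)
  fix \<sigma> show "Om \<sigma> \<noteq> {}" by (rule Om_nonempty)
  fix \<sigma> show "compact (Om \<sigma>)" by (rule Om_compact)
next
  fix t \<sigma> assume t: "0 \<le> (t::real)"
  show "\<phi> t \<sigma> ` Om \<sigma> = Om (\<theta> t \<sigma>)"
  proof
    show "\<phi> t \<sigma> ` Om \<sigma> \<subseteq> Om (\<theta> t \<sigma>)" using Om_inv1[OF t] by blast
    show "Om (\<theta> t \<sigma>) \<subseteq> \<phi> t \<sigma> ` Om \<sigma>" using Om_inv2[OF t] by blast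
  qed
next
  fix \<sigma> and D :: "'x set" assume "bounded D"
  thus "((\<lambda>t. hsemidist (\<phi> t (\<theta> (- t) \<sigma>) ` D) (Om \<sigma>)) \<longlongrightarrow> 0) at_top" by (rule Om_attract)
qed

end

end

theorem theorem3p13:
  fixes \<theta> :: "real \<Rightarrow> 's \<Rightarrow> 's"
    and \<phi> :: "real \<Rightarrow> 's \<Rightarrow> 'x::banach \<Rightarrow> 'x"
  assumes "base_flow \<theta>"
    and "cocycle \<theta> \<phi>"
    and "norm_to_weak_continuous \<phi>"
    and "\<exists>B. pullback_absorbing \<theta> \<phi> B \<and> nested \<theta> B"
  shows "((\<exists>A. pullback_attractor \<theta> \<phi> A) \<longleftrightarrow> pullback_kappa_contracting \<theta> \<phi>) \<and>
         (pullback_kappa_contracting \<theta> \<phi> \<longleftrightarrow> pullback_asymptotically_compact \<theta> \<phi>)"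
proof -
  obtain B where B: "pullback_absorbing \<theta> \<phi> B" "nested \<theta> B" using assms(4) by blast
  interpret CS \<theta> \<phi> B using assms(1-3) B by unfold_locales
  have ab: "(\<exists>A. pullback_attractor \<theta> \<phi> A) \<Longrightarrow> pullback_kappa_contracting \<theta> \<phi>"
    using a_imp_b by blast
  have bc: "pullback_kappa_contracting \<theta> \<phi> \<Longrightarrow> pullback_asymptotically_compact \<theta> \<phi>"
    by (rule b_imp_c)
  have ca: "pullback_asymptotically_compact \<theta> \<phi> \<Longrightarrow> \<exists>A. pullback_attractor \<theta> \<phi> A"
    using c_imp_a by blast
  show ?thesis using ab bc ca by blast
qed

end
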